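(* Let $m\in\mathbb N$ with $m\ge 12$ and $i,j\in\{1,2\}$. Then $r(T_m^i,T_{m+1}^j)=r(T_m^*,T_{m+1}^j)=2m-5$.
   Context: All graphs are finite and simple; a graph "contains" $H$ if it has a subgraph isomorphic to $H$. For graphs $G_1,G_2$, the Ramsey number $r(G_1,G_2)$ is the smallest positive integer $N$ such that for every graph $G$ on $N$ vertices, either $G$ contains a copy of $G_1$ or the complement $\overline G$ contains a copy of $G_2$. For $n\ge 5$, $T_n^1$ is the tree with vertex set $\{v_0,\ldots,v_{n-1}\}$ and edges $v_0v_1,\ldots,v_0v_{n-3},v_{n-4}v_{n-2},v_{n-3}v_{n-1}$, and $T_n^2$ is the tree on the same vertex set with edges $v_0v_1,\ldots,v_0v_{n-3},v_{n-3}v_{n-2},v_{n-3}v_{n-1}$. For $n\ge 4$, $T_n^*$ is the tree on $\{v_0,\ldots,v_{n-1}\}$ with edges $v_0v_1,\ldots,v_0v_{n-3},v_{n-3}v_{n-2},v_{n-2}v_{n-1}$. *)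

theory Defs
  imports Main
begin

definition pairs :: "nat \<Rightarrow> nat set set" where
  "pairs N = {e. e \<subseteq> {0..<N} \<and> card e = 2}"

definition is_graph :: "nat \<Rightarrow> nat set set \<Rightarrow> bool" where
  "is_graph N E \<longleftrightarrow> E \<subseteq> pairs N"

definition compl_graph :: "nat \<Rightarrow> nat set set \<Rightarrow> nat set set" where
  "compl_graph N E = pairs N - E"

definition contains :: "nat \<Rightarrow> nat set set \<Rightarrow> nat \<Rightarrow> nat set set \<Rightarrow> bool" where
  "contains N E n H \<longleftrightarrow>
     (\<exists>f. inj_on f {0..<n} \<and> f ` {0..<n} \<subseteq> {0..<N} \<and> (\<forall>e\<in>H. f ` e \<in> E))"

definition ramsey :: "nat \<Rightarrow> nat set set \<Rightarrow> nat \<Rightarrow> nat set set \<Rightarrow> nat" where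
  "ramsey n1 H1 n2 H2 = (LEAST N. N \<ge> 1 \<and>
     (\<forall>E. is_graph N E \<longrightarrow> contains N E n1 H1 \<or> contains N (compl_graph N E) n2 H2))"

text \<open>The trees T_n^1, T_n^2, T_n^* on vertex set \{0..<n\} (vertex v_k is k).\<close>
definition T1 :: "nat \<Rightarrow> nat set set" where
  "T1 n = {{0, k} | k. 1 \<le> k \<and> k \<le> n - 3} \<union> {{n - 4, n - 2}, {n - 3, n - 1}}"

definition T2 :: "nat \<Rightarrow> nat set set" where
  "T2 n = {{0, k} | k. 1 \<le> k \<and> k \<le> n - 3} \<union> {{n - 3, n - 2}, {n - 3, n - 1}}"

definition Tstar :: "nat \<Rightarrow> nat set set" where
  "Tstar n = {{0, k} | k. 1 \<le> k \<and> k \<le> n - 3} \<union> {{n - 3, n - 2}, {n - 2, n - 1}}"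

definition Ti :: "nat \<Rightarrow> nat \<Rightarrow> nat set set" where
  "Ti i n = (if i = 1 then T1 n else T2 n)"

end

theory Submission
  imports Defs
begin


definition nbr :: "nat \<Rightarrow> nat set set \<Rightarrow> nat \<Rightarrow> nat set" where
  "nbr N F v = {u. u < N \<and> u \<noteq> v \<and> {v,u} \<in> F}"

definition hasT :: "nat \<Rightarrow> nat \<Rightarrow> nat set set \<Rightarrow> nat \<Rightarrow> bool" where
  "hasT t N F n = contains N F n (if t = 1 then T1 n else if t = 2 then T2 n else Tstar n)"

lemma nbr_sym: assumes "u \<in> nbr N F v" "v < N" shows "v \<in> nbr N F u"
proof -
  have "{v,u} = {u,v}" by blast
  then show ?thesis using assms unfolding nbr_def by auto
qed

lemma nbr_sub: "nbr N F v \<subseteq> {0..<N}" unfolding nbr_def by auto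

lemma fin_nbr[simp]: "finite (nbr N F v)"
  by (rule finite_subset[OF nbr_sub]) simp

lemma nbr_E: "u \<in> nbr N F v \<Longrightarrow> {v,u} \<in> F" unfolding nbr_def by auto
lemma nbr_lt: "u \<in> nbr N F v \<Longrightarrow> u < N" unfolding nbr_def by auto
lemma nbr_ne: "u \<in> nbr N F v \<Longrightarrow> u \<noteq> v" unfolding nbr_def by auto

lemma enum: assumes "finite L" "card L \<ge> k"
  shows "\<exists>h. inj_on h {1..k} \<and> h ` {1..k} \<subseteq> L"
proof -
  obtain L' where L': "L' \<subseteq> L" "card L' = k" using assms obtain_subset_with_card_n by metis
  then have "finite L'" using assms finite_subset by blast
  then obtain g where g: "bij_betw g {0..<card L'} L'" using ex_bij_betw_nat_finite by blast
  define h where "h = (\<lambda>i. g (i - 1))"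
  have "inj_on h {1..k}"
  proof (rule inj_onI)
    fix p q assume p: "p \<in> {1..k}" and q: "q \<in> {1..k}" and e: "h p = h q"
    have "p - 1 \<in> {0..<card L'}" "q - 1 \<in> {0..<card L'}" using p q L' by auto
    then have "p - 1 = q - 1" using e g unfolding h_def bij_betw_def by (auto dest: inj_onD)
    then show "p = q" using p q by auto
  qed
  moreover have "h ` {1..k} \<subseteq> L"
  proof
    fix z assume "z \<in> h ` {1..k}"
    then obtain p where p: "p \<in> {1..k}" "z = g (p - 1)" unfolding h_def by auto
    then have "p - 1 \<in> {0..<card L'}" using L' by auto
    then show "z \<in> L" using g L' p unfolding bij_betw_def by auto
  qed
  ultimately show ?thesis by blast
qed

lemma inj_split:
  assumes "{0..<n} = {1..k} \<union> S" "inj_on f {1..k}" "inj_on f S" "f ` {1..k} \<inter> f ` S = {}"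
  shows "inj_on f {0..<n}"
proof -
  have "f ` ({1..k} - S) \<inter> f ` (S - {1..k}) = {}" using assms(4) by blast
  then show ?thesis unfolding assms(1) using assms(2,3) by (simp add: inj_on_Un)
qed

lemma emb2:
  assumes n: "n \<ge> 5" and c: "c < N" and a: "a \<in> nbr N F c" and x: "x \<in> nbr N F a"
    and y: "y \<in> nbr N F a" and xc: "x \<noteq> c" and yc: "y \<noteq> c" and xy: "x \<noteq> y"
    and cd: "card (nbr N F c - {a,x,y}) \<ge> n - 4"
  shows "hasT 2 N F n"
proof -
  obtain h where h: "inj_on h {1..n-4}" "h ` {1..n-4} \<subseteq> nbr N F c - {a,x,y}"
    using enum[OF _ cd] by auto
  define f where "f = (\<lambda>i. if i = 0 then c else if i = n-3 then a else if i = n-2 then x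
     else if i = n-1 then y else h i)"
  have nz: "n-3 \<noteq> 0" "n-2 \<noteq> 0" "n-1 \<noteq> 0" "n-3 \<noteq> n-2" "n-3 \<noteq> n-1" "n-2 \<noteq> n-1" using n by auto
  have f0: "f 0 = c" and fa: "f (n-3) = a" and fx: "f (n-2) = x" and fy: "f (n-1) = y"
    unfolding f_def using nz by auto
  have fh: "\<And>i. i \<in> {1..n-4} \<Longrightarrow> f i = h i"
  proof -
    fix i assume "i \<in> {1..n-4}"
    then have "i \<noteq> 0" "i \<noteq> n-3" "i \<noteq> n-2" "i \<noteq> n-1" using n by auto
    then show "f i = h i" unfolding f_def by simp
  qed
  have img: "f ` {1..n-4} \<subseteq> nbr N F c - {a,x,y}" using h(2) fh by auto
  have cn: "c \<notin> nbr N F c" unfolding nbr_def by auto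
  have ds: "c \<noteq> a" "a \<noteq> x" "a \<noteq> y" using a x y nbr_ne by metis+
  have S: "{0..<n} = {1..n-4} \<union> {0, n-3, n-2, n-1}" using n by auto
  have inj: "inj_on f {0..<n}"
  proof (rule inj_split[OF S])
    show "inj_on f {1..n-4}" using h(1) fh by (metis inj_on_cong)
    show "inj_on f {0, n-3, n-2, n-1}" using f0 fa fx fy ds xc yc xy by (auto simp: inj_on_def)
    show "f ` {1..n-4} \<inter> f ` {0, n-3, n-2, n-1} = {}" using img cn f0 fa fx fy by auto
  qed
  have rng: "f ` {0..<n} \<subseteq> {0..<N}"
  proof
    fix z assume "z \<in> f ` {0..<n}"
    then obtain p where p0: "p \<in> {0..<n}" "z = f p" by auto
    then have p: "p \<in> {1..n-4} \<union> {0, n-3, n-2, n-1}" "z = f p" using S by blast+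
    then show "z \<in> {0..<N}"
    proof (cases "p \<in> {1..n-4}")
      case True then have "z \<in> nbr N F c" using img p(2) by (auto simp: image_subset_iff)
      then show ?thesis using nbr_lt by auto
    next
      case False then show ?thesis using p f0 fa fx fy c nbr_lt[OF a] nbr_lt[OF x] nbr_lt[OF y] by auto
    qed
  qed
  have edges: "\<forall>e\<in>T2 n. f ` e \<in> F"
  proof
    fix e assume "e \<in> T2 n"
    then consider k where "e = {0,k}" "1 \<le> k" "k \<le> n-3" | "e = {n-3,n-2}" | "e = {n-3,n-1}"
      unfolding T2_def by auto
    then show "f ` e \<in> F"
    proof cases
      case (1 k)
      show ?thesis
      proof (cases "k = n-3")
        case True then show ?thesis using 1 f0 fa nbr_E[OF a] by auto
      next
        case False
        then have "k \<in> {1..n-4}" using 1 by auto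
        then have "f k \<in> nbr N F c" using img by (auto simp: image_subset_iff)
        then show ?thesis using 1 f0 nbr_E by auto
      qed
    next
      case 2 then show ?thesis using fa fx nbr_E[OF x] by auto
    next
      case 3 then show ?thesis using fa fy nbr_E[OF y] by auto
    qed
  qed
  show ?thesis unfolding hasT_def contains_def using inj rng edges by auto
qed

lemma emb3:
  assumes n: "n \<ge> 5" and c: "c < N" and a: "a \<in> nbr N F c" and x: "x \<in> nbr N F a"
    and y: "y \<in> nbr N F x" and xc: "x \<noteq> c" and yc: "y \<noteq> c" and ya: "y \<noteq> a"
    and cd: "card (nbr N F c - {a,x,y}) \<ge> n - 4"
  shows "hasT 3 N F n"
proof -
  obtain h where h: "inj_on h {1..n-4}" "h ` {1..n-4} \<subseteq> nbr N F c - {a,x,y}"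
    using enum[OF _ cd] by auto
  define f where "f = (\<lambda>i. if i = 0 then c else if i = n-3 then a else if i = n-2 then x
     else if i = n-1 then y else h i)"
  have nz: "n-3 \<noteq> 0" "n-2 \<noteq> 0" "n-1 \<noteq> 0" "n-3 \<noteq> n-2" "n-3 \<noteq> n-1" "n-2 \<noteq> n-1" using n by auto
  have f0: "f 0 = c" and fa: "f (n-3) = a" and fx: "f (n-2) = x" and fy: "f (n-1) = y"
    unfolding f_def using nz by auto
  have fh: "\<And>i. i \<in> {1..n-4} \<Longrightarrow> f i = h i"
  proof -
    fix i assume "i \<in> {1..n-4}"
    then have "i \<noteq> 0" "i \<noteq> n-3" "i \<noteq> n-2" "i \<noteq> n-1" using n by auto
    then show "f i = h i" unfolding f_def by simp
  qed
  have img: "f ` {1..n-4} \<subseteq> nbr N F c - {a,x,y}" using h(2) fh by auto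
  have cn: "c \<notin> nbr N F c" unfolding nbr_def by auto
  have ds: "c \<noteq> a" "a \<noteq> x" "x \<noteq> y" using a x y nbr_ne by metis+
  have S: "{0..<n} = {1..n-4} \<union> {0, n-3, n-2, n-1}" using n by auto
  have inj: "inj_on f {0..<n}"
  proof (rule inj_split[OF S])
    show "inj_on f {1..n-4}" using h(1) fh by (metis inj_on_cong)
    show "inj_on f {0, n-3, n-2, n-1}" using f0 fa fx fy ds xc yc ya by (auto simp: inj_on_def)
    show "f ` {1..n-4} \<inter> f ` {0, n-3, n-2, n-1} = {}" using img cn f0 fa fx fy by auto
  qed
  have rng: "f ` {0..<n} \<subseteq> {0..<N}"
  proof
    fix z assume "z \<in> f ` {0..<n}"
    then obtain p where p0: "p \<in> {0..<n}" "z = f p" by auto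
    then have p: "p \<in> {1..n-4} \<union> {0, n-3, n-2, n-1}" "z = f p" using S by blast+
    then show "z \<in> {0..<N}"
    proof (cases "p \<in> {1..n-4}")
      case True then have "z \<in> nbr N F c" using img p(2) by (auto simp: image_subset_iff)
      then show ?thesis using nbr_lt by auto
    next
      case False then show ?thesis using p f0 fa fx fy c nbr_lt[OF a] nbr_lt[OF x] nbr_lt[OF y] by auto
    qed
  qed
  have edges: "\<forall>e\<in>Tstar n. f ` e \<in> F"
  proof
    fix e assume "e \<in> Tstar n"
    then consider k where "e = {0,k}" "1 \<le> k" "k \<le> n-3" | "e = {n-3,n-2}" | "e = {n-2,n-1}"
      unfolding Tstar_def by auto
    then show "f ` e \<in> F"
    proof cases
      case (1 k)
      show ?thesis
      proof (cases "k = n-3")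
        case True then show ?thesis using 1 f0 fa nbr_E[OF a] by auto
      next
        case False
        then have "k \<in> {1..n-4}" using 1 by auto
        then have "f k \<in> nbr N F c" using img by (auto simp: image_subset_iff)
        then show ?thesis using 1 f0 nbr_E by auto
      qed
    next
      case 2 then show ?thesis using fa fx nbr_E[OF x] by auto
    next
      case 3 then show ?thesis using fx fy nbr_E[OF y] by auto
    qed
  qed
  show ?thesis unfolding hasT_def contains_def using inj rng edges by auto
qed

lemma emb1:
  assumes n: "n \<ge> 5" and c: "c < N" and a: "a \<in> nbr N F c" and b: "b \<in> nbr N F c"
    and x: "x \<in> nbr N F a" and y: "y \<in> nbr N F b"
    and ab: "a \<noteq> b" and xc: "x \<noteq> c" and xb: "x \<noteq> b" and yc: "y \<noteq> c" and ya: "y \<noteq> a" and yx: "y \<noteq> x"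
    and cd: "card (nbr N F c - {a,b,x,y}) \<ge> n - 5"
  shows "hasT 1 N F n"
proof -
  obtain h where h: "inj_on h {1..n-5}" "h ` {1..n-5} \<subseteq> nbr N F c - {a,b,x,y}"
    using enum[OF _ cd] by auto
  define f where "f = (\<lambda>i. if i = 0 then c else if i = n-4 then a else if i = n-3 then b
     else if i = n-2 then x else if i = n-1 then y else h i)"
  have nz: "n-4 \<noteq> 0" "n-3 \<noteq> 0" "n-2 \<noteq> 0" "n-1 \<noteq> 0" "n-4 \<noteq> n-3" "n-4 \<noteq> n-2" "n-4 \<noteq> n-1"
     "n-3 \<noteq> n-2" "n-3 \<noteq> n-1" "n-2 \<noteq> n-1" using n by auto
  have f0: "f 0 = c" and fa: "f (n-4) = a" and fb: "f (n-3) = b" and fx: "f (n-2) = x" and fy: "f (n-1) = y"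
    unfolding f_def using nz by auto
  have fh: "\<And>i. i \<in> {1..n-5} \<Longrightarrow> f i = h i"
  proof -
    fix i assume "i \<in> {1..n-5}"
    then have "i \<noteq> 0" "i \<noteq> n-4" "i \<noteq> n-3" "i \<noteq> n-2" "i \<noteq> n-1" using n by auto
    then show "f i = h i" unfolding f_def by simp
  qed
  have img: "f ` {1..n-5} \<subseteq> nbr N F c - {a,b,x,y}" using h(2) fh by auto
  have cn: "c \<notin> nbr N F c" unfolding nbr_def by auto
  have ds: "c \<noteq> a" "c \<noteq> b" "a \<noteq> x" "b \<noteq> y" using a b x y nbr_ne by metis+
  have S: "{0..<n} = {1..n-5} \<union> {0, n-4, n-3, n-2, n-1}" using n by auto
  have inj: "inj_on f {0..<n}"
  proof (rule inj_split[OF S])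
    show "inj_on f {1..n-5}" using h(1) fh by (metis inj_on_cong)
    show "inj_on f {0, n-4, n-3, n-2, n-1}" using f0 fa fb fx fy ds ab xc xb yc ya yx by (auto simp: inj_on_def)
    show "f ` {1..n-5} \<inter> f ` {0, n-4, n-3, n-2, n-1} = {}" using img cn f0 fa fb fx fy by auto
  qed
  have rng: "f ` {0..<n} \<subseteq> {0..<N}"
  proof
    fix z assume "z \<in> f ` {0..<n}"
    then obtain p where p0: "p \<in> {0..<n}" "z = f p" by auto
    then have p: "p \<in> {1..n-5} \<union> {0, n-4, n-3, n-2, n-1}" "z = f p" using S by blast+
    then show "z \<in> {0..<N}"
    proof (cases "p \<in> {1..n-5}")
      case True then have "z \<in> nbr N F c" using img p(2) by (auto simp: image_subset_iff)
      then show ?thesis using nbr_lt by auto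
    next
      case False then show ?thesis using p f0 fa fb fx fy c nbr_lt[OF a] nbr_lt[OF b] nbr_lt[OF x] nbr_lt[OF y] by auto
    qed
  qed
  have edges: "\<forall>e\<in>T1 n. f ` e \<in> F"
  proof
    fix e assume "e \<in> T1 n"
    then consider k where "e = {0,k}" "1 \<le> k" "k \<le> n-3" | "e = {n-4,n-2}" | "e = {n-3,n-1}"
      unfolding T1_def by auto
    then show "f ` e \<in> F"
    proof cases
      case (1 k)
      show ?thesis
      proof (cases "k = n-3 \<or> k = n-4")
        case True then show ?thesis using 1 f0 fa fb nbr_E[OF a] nbr_E[OF b] by auto
      next
        case False
        then have "k \<in> {1..n-5}" using 1 by auto
        then have "f k \<in> nbr N F c" using img by (auto simp: image_subset_iff)
        then show ?thesis using 1 f0 nbr_E by auto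
      qed
    next
      case 2 then show ?thesis using fa fx nbr_E[OF x] by auto
    next
      case 3 then show ?thesis using fb fy nbr_E[OF y] by auto
    qed
  qed
  show ?thesis unfolding hasT_def contains_def using inj rng edges by auto
qed

lemma c1: "card {a} \<le> 1" by simp
lemma c2: "card {a,b} \<le> 2" by (simp add: card_insert_if)
lemma c3: "card {a,b,c} \<le> 3" by (simp add: card_insert_if)
lemma c4: "card {a,b,c,d} \<le> 4" by (simp add: card_insert_if)

lemma card_rm: assumes "finite A" "A \<inter> B \<subseteq> C" "finite C" shows "card A - card C \<le> card (A - B)"
proof -
  have "card (A - B) = card A - card (A \<inter> B)" using assms by (simp add: card_Diff_subset_Int)
  moreover have "card (A \<inter> B) \<le> card C" using assms card_mono by blast
  ultimately show ?thesis by linarith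
qed

lemma T2_big:
  assumes n: "n \<ge> 5" and c: "c < N" and D: "card (nbr N F c) \<ge> n - 1" and a: "a \<in> nbr N F c" and x: "x \<in> nbr N F a" and y: "y \<in> nbr N F a" and h1: "x \<noteq> c" and h2: "y \<noteq> c" and h3: "x \<noteq> y"
  shows "hasT 2 N F n"
proof -
  have "card (nbr N F c) - card {a,x,y} \<le> card (nbr N F c - {a,x,y})"
    by (rule card_rm) (simp, blast, simp)
  moreover have "card {a,x,y} \<le> 3" by (rule c3)
  ultimately have "card (nbr N F c - {a,x,y}) \<ge> n - 4" using n D by linarith
  then show ?thesis by (rule emb2[OF n c a x y h1 h2 h3])
qed

lemma T2_p1:
  assumes n: "n \<ge> 5" and c: "c < N" and D: "card (nbr N F c) \<ge> n - 2" and a: "a \<in> nbr N F c" and x: "x \<in> nbr N F a" and y: "y \<in> nbr N F a" and h1: "x \<noteq> c" and h2: "y \<noteq> c" and h3: "x \<noteq> y" and xo: "x \<notin> nbr N F c"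
  shows "hasT 2 N F n"
proof -
  have "card (nbr N F c) - card {a,y} \<le> card (nbr N F c - {a,x,y})"
    by (rule card_rm) (simp, (use xo in blast), simp)
  moreover have "card {a,y} \<le> 2" by (rule c2)
  ultimately have "card (nbr N F c - {a,x,y}) \<ge> n - 4" using n D by linarith
  then show ?thesis by (rule emb2[OF n c a x y h1 h2 h3])
qed

lemma T2_ex:
  assumes n: "n \<ge> 5" and c: "c < N" and D: "card (nbr N F c) \<ge> n - 3" and a: "a \<in> nbr N F c" and x: "x \<in> nbr N F a" and y: "y \<in> nbr N F a" and h1: "x \<noteq> c" and h2: "y \<noteq> c" and h3: "x \<noteq> y" and xo: "x \<notin> nbr N F c" and yo: "y \<notin> nbr N F c"
  shows "hasT 2 N F n"
proof -
  have "card (nbr N F c) - card {a} \<le> card (nbr N F c - {a,x,y})"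
    by (rule card_rm) (simp, (use xo yo in blast), simp)
  moreover have "card {a} \<le> 1" by (rule c1)
  ultimately have "card (nbr N F c - {a,x,y}) \<ge> n - 4" using n D by linarith
  then show ?thesis by (rule emb2[OF n c a x y h1 h2 h3])
qed

lemma T1_big:
  assumes n: "n \<ge> 5" and c: "c < N" and D: "card (nbr N F c) \<ge> n - 1" and a: "a \<in> nbr N F c" and b: "b \<in> nbr N F c" and x: "x \<in> nbr N F a" and y: "y \<in> nbr N F b" and h1: "a \<noteq> b" and h2: "x \<noteq> c" and h3: "x \<noteq> b" and h4: "y \<noteq> c" and h5: "y \<noteq> a" and h6: "y \<noteq> x"
  shows "hasT 1 N F n"
proof -
  have "card (nbr N F c) - card {a,b,x,y} \<le> card (nbr N F c - {a,b,x,y})"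
    by (rule card_rm) (simp, blast, simp)
  moreover have "card {a,b,x,y} \<le> 4" by (rule c4)
  ultimately have "card (nbr N F c - {a,b,x,y}) \<ge> n - 5" using n D by linarith
  then show ?thesis by (rule emb1[OF n c a b x y h1 h2 h3 h4 h5 h6])
qed

lemma T1_p1:
  assumes n: "n \<ge> 5" and c: "c < N" and D: "card (nbr N F c) \<ge> n - 2" and a: "a \<in> nbr N F c" and b: "b \<in> nbr N F c" and x: "x \<in> nbr N F a" and y: "y \<in> nbr N F b" and h1: "a \<noteq> b" and h2: "x \<noteq> c" and h3: "x \<noteq> b" and h4: "y \<noteq> c" and h5: "y \<noteq> a" and h6: "y \<noteq> x" and xo: "x \<notin> nbr N F c"
  shows "hasT 1 N F n"
proof -
  have "card (nbr N F c) - card {a,b,y} \<le> card (nbr N F c - {a,b,x,y})"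
    by (rule card_rm) (simp, (use xo in blast), simp)
  moreover have "card {a,b,y} \<le> 3" by (rule c3)
  ultimately have "card (nbr N F c - {a,b,x,y}) \<ge> n - 5" using n D by linarith
  then show ?thesis by (rule emb1[OF n c a b x y h1 h2 h3 h4 h5 h6])
qed

lemma T1_ex:
  assumes n: "n \<ge> 5" and c: "c < N" and D: "card (nbr N F c) \<ge> n - 3" and a: "a \<in> nbr N F c" and b: "b \<in> nbr N F c" and x: "x \<in> nbr N F a" and y: "y \<in> nbr N F b" and h1: "a \<noteq> b" and h2: "x \<noteq> c" and h3: "x \<noteq> b" and h4: "y \<noteq> c" and h5: "y \<noteq> a" and h6: "y \<noteq> x" and xo: "x \<notin> nbr N F c" and yo: "y \<notin> nbr N F c"
  shows "hasT 1 N F n"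
proof -
  have "card (nbr N F c) - card {a,b} \<le> card (nbr N F c - {a,b,x,y})"
    by (rule card_rm) (simp, (use xo yo in blast), simp)
  moreover have "card {a,b} \<le> 2" by (rule c2)
  ultimately have "card (nbr N F c - {a,b,x,y}) \<ge> n - 5" using n D by linarith
  then show ?thesis by (rule emb1[OF n c a b x y h1 h2 h3 h4 h5 h6])
qed

lemma T3_big:
  assumes n: "n \<ge> 5" and c: "c < N" and D: "card (nbr N F c) \<ge> n - 1" and a: "a \<in> nbr N F c" and x: "x \<in> nbr N F a" and y: "y \<in> nbr N F x" and h1: "x \<noteq> c" and h2: "y \<noteq> c" and h3: "y \<noteq> a"
  shows "hasT 3 N F n"
proof -
  have "card (nbr N F c) - card {a,x,y} \<le> card (nbr N F c - {a,x,y})"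
    by (rule card_rm) (simp, blast, simp)
  moreover have "card {a,x,y} \<le> 3" by (rule c3)
  ultimately have "card (nbr N F c - {a,x,y}) \<ge> n - 4" using n D by linarith
  then show ?thesis by (rule emb3[OF n c a x y h1 h2 h3])
qed

lemma T3_p1:
  assumes n: "n \<ge> 5" and c: "c < N" and D: "card (nbr N F c) \<ge> n - 2" and a: "a \<in> nbr N F c" and x: "x \<in> nbr N F a" and y: "y \<in> nbr N F x" and h1: "x \<noteq> c" and h2: "y \<noteq> c" and h3: "y \<noteq> a" and xo: "x \<notin> nbr N F c"
  shows "hasT 3 N F n"
proof -
  have "card (nbr N F c) - card {a,y} \<le> card (nbr N F c - {a,x,y})"
    by (rule card_rm) (simp, (use xo in blast), simp)
  moreover have "card {a,y} \<le> 2" by (rule c2)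
  ultimately have "card (nbr N F c - {a,x,y}) \<ge> n - 4" using n D by linarith
  then show ?thesis by (rule emb3[OF n c a x y h1 h2 h3])
qed

lemma T3_ex:
  assumes n: "n \<ge> 5" and c: "c < N" and D: "card (nbr N F c) \<ge> n - 3" and a: "a \<in> nbr N F c" and x: "x \<in> nbr N F a" and y: "y \<in> nbr N F x" and h1: "x \<noteq> c" and h2: "y \<noteq> c" and h3: "y \<noteq> a" and xo: "x \<notin> nbr N F c" and yo: "y \<notin> nbr N F c"
  shows "hasT 3 N F n"
proof -
  have "card (nbr N F c) - card {a} \<le> card (nbr N F c - {a,x,y})"
    by (rule card_rm) (simp, (use xo yo in blast), simp)
  moreover have "card {a} \<le> 1" by (rule c1)
  ultimately have "card (nbr N F c - {a,x,y}) \<ge> n - 4" using n D by linarith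
  then show ?thesis by (rule emb3[OF n c a x y h1 h2 h3])
qed



lemma pick: assumes "finite F" "card F < card A" shows "\<exists>x\<in>A. x \<notin> F"
proof (rule ccontr)
  assume "\<not> ?thesis"
  then have "A \<subseteq> F" by blast
  then have "card A \<le> card F" by (rule card_mono[OF assms(1)])
  then show False using assms(2) by simp
qed

lemma pick1: "card A > 1 \<Longrightarrow> \<exists>x\<in>A. x \<noteq> p"
  using pick[of "{p}" A] by simp
lemma pick2: "card A > 2 \<Longrightarrow> \<exists>x\<in>A. x \<noteq> p \<and> x \<noteq> q"
  using pick[of "{p,q}" A] c2[of p q] by simp
lemma pick3: "card A > 3 \<Longrightarrow> \<exists>x\<in>A. x \<noteq> p \<and> x \<noteq> q \<and> x \<noteq> r"
  using pick[of "{p,q,r}" A] c3[of p q r] by simp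
lemma pick0: assumes "card A > 0" shows "\<exists>x. x\<in>A"
proof -
  have "A \<noteq> {}" using assms by auto
  then show ?thesis by blast
qed
lemma card_ind: "finite B \<Longrightarrow> card {b\<in>B. P b} = (\<Sum>b\<in>B. if P b then 1 else 0)"
  by (simp add: sum.inter_filter[symmetric])
lemma dc: assumes "finite A" "finite B"
  shows "(\<Sum>a\<in>A. card {b\<in>B. P a b}) = (\<Sum>b\<in>B. card {a\<in>A. P a b})"
proof -
  have "(\<Sum>a\<in>A. card {b\<in>B. P a b}) = (\<Sum>a\<in>A. \<Sum>b\<in>B. if P a b then 1 else 0)"
    using assms(2) by (simp add: card_ind)
  also have "\<dots> = (\<Sum>b\<in>B. \<Sum>a\<in>A. if P a b then 1 else 0)" by (rule sum.swap)
  also have "\<dots> = (\<Sum>b\<in>B. card {a\<in>A. P a b})"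
    using assms(1) by (simp add: card_ind)
  finally show ?thesis .
qed

locale rs =
  fixes m N :: nat and E :: "nat set set" and i j :: nat
  assumes m12: "m \<ge> 12" and NN: "N = 2*m - 5" and ii: "i \<in> {1,2,3}" and jj: "j \<in> {1,2}"
    and noR: "\<not> hasT i N E m" and noB: "\<not> hasT j N (compl_graph N E) (m+1)"
begin

abbreviation "EB \<equiv> compl_graph N E"
abbreviation "nR \<equiv> nbr N E"
abbreviation "nB \<equiv> nbr N EB"

lemma nB_iff: assumes "v < N" shows "u \<in> nB v \<longleftrightarrow> u < N \<and> u \<noteq> v \<and> u \<notin> nR v"
proof -
  have "card {v,u} = 2 \<longleftrightarrow> u \<noteq> v" by (simp add: card_insert_if)
  then show ?thesis using assms unfolding nbr_def compl_graph_def pairs_def by auto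
qed


lemma deg_sum: assumes "v < N" shows "card (nR v) + card (nB v) = 2*m - 6"
proof -
  have "\<And>u. u \<in> nR v \<union> nB v \<longleftrightarrow> u \<in> {0..<N} - {v}"
  proof -
    fix u
    show "u \<in> nR v \<union> nB v \<longleftrightarrow> u \<in> {0..<N} - {v}"
      using nB_iff[OF assms, of u] nbr_lt[of u N E v] nbr_ne[of u N E v] by auto
  qed
  then have U: "nR v \<union> nB v = {0..<N} - {v}" by blast
  have I: "nR v \<inter> nB v = {}" using nB_iff[OF assms] by blast
  have "card (nR v \<union> nB v) = card (nR v) + card (nB v)"
    by (rule card_Un_disjoint) (simp_all add: I)
  also have "card (nR v \<union> nB v) = N - 1" unfolding U using assms by simp
  finally show ?thesis using NN by simp
qed

lemma nR_nB: "v < N \<Longrightarrow> u \<in> nR v \<Longrightarrow> u \<notin> nB v" using nB_iff by blast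
lemma nB_nR: "v < N \<Longrightarrow> u \<in> nB v \<Longrightarrow> u \<notin> nR v" using nB_iff by blast
lemma nB_I: "v < N \<Longrightarrow> u < N \<Longrightarrow> u \<noteq> v \<Longrightarrow> u \<notin> nR v \<Longrightarrow> u \<in> nB v" using nB_iff by blast
lemma nR_I: "v < N \<Longrightarrow> u < N \<Longrightarrow> u \<noteq> v \<Longrightarrow> u \<notin> nB v \<Longrightarrow> u \<in> nR v" using nB_iff by blast

lemma m5: "m \<ge> 5" "m + 1 \<ge> 5" using m12 by auto

lemma P1: assumes c: "c < N" shows "card (nB c) \<le> m - 1"
proof (rule ccontr)
  assume "\<not> ?thesis" then have Dc: "card (nB c) \<ge> m" by simp
  then have Dc': "card (nB c) \<ge> (m+1) - 1" by simp
  obtain S where S: "S \<subseteq> nB c" "card S + 1 \<ge> card (nB c)" "\<forall>a\<in>S. card (nB a) \<le> 3"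
  proof (cases "j = 2")
    case True
    have "\<forall>a\<in>nB c. card (nB a) \<le> 3"
    proof
      fix a assume a: "a \<in> nB c"
      show "card (nB a) \<le> 3"
      proof (rule ccontr)
        assume "\<not> ?thesis" then have ca: "card (nB a) > 2" by simp
        obtain x where x: "x \<in> nB a" "x \<noteq> c" using pick1[of "nB a" c] ca by auto
        obtain y where y: "y \<in> nB a" "y \<noteq> c" "y \<noteq> x" using pick2[of "nB a" c x] ca by auto
        have "hasT 2 N EB (m+1)" by (rule T2_big[OF m5(2) c Dc' a x(1) y(1) x(2) y(2)]) (use y in auto)
        then show False using noB True by simp
      qed
    qed
    then show ?thesis using that[of "nB c"] by auto
  next
    case False then have j1: "j = 1" using jj by auto
    show ?thesis
    proof (cases "\<exists>a\<in>nB c. card (nB a) \<ge> 4")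
      case True
      then obtain a where a: "a \<in> nB c" "card (nB a) \<ge> 4" by auto
      have "\<forall>b\<in>nB c - {a}. card (nB b) \<le> 3"
      proof
        fix b assume b: "b \<in> nB c - {a}"
        show "card (nB b) \<le> 3"
        proof (rule ccontr)
          assume "\<not> ?thesis" then have cb: "card (nB b) > 3" by simp
          obtain x where x: "x \<in> nB a" "x \<noteq> c" "x \<noteq> b" using pick2[of "nB a" c b] a by auto
          obtain y where y: "y \<in> nB b" "y \<noteq> c" "y \<noteq> a" "y \<noteq> x" using pick3[of "nB b" c a x] cb by auto
          have "hasT 1 N EB (m+1)"
            by (rule T1_big[OF m5(2) c Dc' a(1) _ x(1) y(1)]) (use b x y in auto)
          then show False using noB j1 by simp
        qed
      qed
      moreover have "card (nB c - {a}) + 1 \<ge> card (nB c)" using a(1) by (simp add: card_Diff_singleton)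
      ultimately show ?thesis using that[of "nB c - {a}"] by auto
    next
      case False
      then have "\<forall>a\<in>nB c. card (nB a) \<le> 3" by force
      then show ?thesis using that[of "nB c"] by auto
    qed
  qed
  have cS: "c \<notin> S" using S(1) nbr_ne by blast
  have Sf: "\<And>a. a \<in> S \<Longrightarrow> a < N \<and> card (nR a) \<ge> 2*m - 9"
  proof -
    fix a assume a: "a \<in> S"
    then have aN: "a < N" using S(1) nbr_lt by blast
    show "a < N \<and> card (nR a) \<ge> 2*m - 9" using deg_sum[OF aN] S(3) a aN by fastforce
  qed
  have cSz: "card S \<ge> m - 1" using S(2) Dc by linarith
  have SR: "\<And>a. a \<in> S \<Longrightarrow> card (nR a \<inter> S) \<ge> m - 4"
  proof -
    fix a assume a: "a \<in> S"
    have aN: "a < N" using Sf a by blast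
    have ca: "c \<in> nB a" using nbr_sym[of a N EB c] S(1) a c by blast
    have sub: "S - {a} \<subseteq> (nR a \<inter> S) \<union> (nB a - {c})"
    proof
      fix s assume s: "s \<in> S - {a}"
      then have "s < N" "s \<noteq> a" "s \<noteq> c" using Sf cS by auto
      then show "s \<in> (nR a \<inter> S) \<union> (nB a - {c})" using nB_I[OF aN] s by blast
    qed
    have "card (S - {a}) \<le> card ((nR a \<inter> S) \<union> (nB a - {c}))"
      by (rule card_mono) (simp_all add: sub)
    also have "\<dots> \<le> card (nR a \<inter> S) + card (nB a - {c})" by (rule card_Un_le)
    finally have "card (S - {a}) \<le> card (nR a \<inter> S) + card (nB a - {c})" .
    moreover have "card (nB a - {c}) = card (nB a) - 1" using ca by simp
    moreover have "card (S - {a}) = card S - 1" using a by simp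
    ultimately show "card (nR a \<inter> S) \<ge> m - 4" using S(3) a cSz by fastforce
  qed
  have "card S > 0" using cSz m12 by linarith
  then obtain a1 where a1: "a1 \<in> S" using pick0[of S] by auto
  have a1N: "a1 < N" and D1: "card (nR a1) \<ge> m - 1" using Sf[OF a1] m12 by auto
  have T1sz: "card (nR a1 \<inter> S) > 1" using SR[OF a1] m12 by linarith
  have big: "\<And>a. a \<in> S \<Longrightarrow> card (nR a) > 3" using Sf m12 by fastforce
  consider "i = 1" | "i = 2" | "i = 3" using ii by auto
  then show False
  proof cases
    case 1
    obtain a where a: "a \<in> nR a1 \<inter> S" using pick0[of "nR a1 \<inter> S"] T1sz by auto
    obtain b where b: "b \<in> nR a1 \<inter> S" "b \<noteq> a" using pick1[of "nR a1 \<inter> S" a] T1sz by auto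
    have ca: "card (nR a) > 2" using big a by force
    have cb: "card (nR b) > 3" using big b by force
    obtain x where x: "x \<in> nR a" "x \<noteq> a1" "x \<noteq> b" using pick2[OF ca, of a1 b] by auto
    obtain y where y: "y \<in> nR b" "y \<noteq> a1" "y \<noteq> a" "y \<noteq> x" using pick3[OF cb, of a1 a x] by auto
    have "hasT 1 N E m" by (rule T1_big[where a=a and b=b, OF m5(1) a1N D1 _ _ x(1) y(1)]) (use a b x y in auto)
    then show False using noR 1 by simp
  next
    case 2
    obtain a where a: "a \<in> nR a1 \<inter> S" using pick0[of "nR a1 \<inter> S"] T1sz by auto
    have ca: "card (nR a) > 2" using big a by force
    obtain x where x: "x \<in> nR a" "x \<noteq> a1" using pick1[of "nR a" a1] ca by auto
    obtain y where y: "y \<in> nR a" "y \<noteq> a1" "y \<noteq> x" using pick2[OF ca, of a1 x] by auto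
    have "hasT 2 N E m" by (rule T2_big[where a=a, OF m5(1) a1N D1 _ x(1) y(1)]) (use a x y in auto)
    then show False using noR 2 by simp
  next
    case 3
    obtain a where a: "a \<in> nR a1 \<inter> S" using pick0[of "nR a1 \<inter> S"] T1sz by auto
    have "card (nR a \<inter> S) > 1" using SR[of a] a m12 by fastforce
    then obtain x where x: "x \<in> nR a \<inter> S" "x \<noteq> a1" using pick1[of "nR a \<inter> S" a1] by auto
    have cx: "card (nR x) > 2" using big x by force
    obtain y where y: "y \<in> nR x" "y \<noteq> a1" "y \<noteq> a" using pick2[OF cx, of a1 a] by auto
    have "hasT 3 N E m" by (rule T3_big[where a=a and x=x, OF m5(1) a1N D1 _ _ y(1)]) (use a x y in auto)
    then show False using noR 3 by simp
  qed
qed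

lemma P2: assumes c: "c < N" shows "card (nR c) \<le> m - 2"
proof (rule ccontr)
  assume "\<not> ?thesis" then have D: "card (nR c) \<ge> m - 1" by simp
  have rbig: "\<And>v. v < N \<Longrightarrow> card (nR v) > 3"
  proof -
    fix v assume v: "v < N"
    show "card (nR v) > 3" using deg_sum[OF v] P1[OF v] m12 by linarith
  qed
  have "card (nR c) > 1" using D m12 by linarith
  then obtain a where a: "a \<in> nR c" using pick0[of "nR c"] by auto
  have aN: "a < N" using a nbr_lt by blast
  have ca: "card (nR a) > 3" using rbig[OF aN] .
  consider "i = 1" | "i = 2" | "i = 3" using ii by auto
  then show False
  proof cases
    case 1
    obtain b where b: "b \<in> nR c" "b \<noteq> a" using pick1[of "nR c" a] \<open>card (nR c) > 1\<close> by auto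
    have cb: "card (nR b) > 3" using rbig b nbr_lt by blast
    obtain x where x: "x \<in> nR a" "x \<noteq> c" "x \<noteq> b" using pick2[of "nR a" c b] ca by auto
    obtain y where y: "y \<in> nR b" "y \<noteq> c" "y \<noteq> a" "y \<noteq> x" using pick3[OF cb, of c a x] by auto
    have "hasT 1 N E m" by (rule T1_big[where a=a and b=b, OF m5(1) c D a b(1) x(1) y(1)]) (use b x y in auto)
    then show False using noR 1 by simp
  next
    case 2
    obtain x where x: "x \<in> nR a" "x \<noteq> c" using pick1[of "nR a" c] ca by auto
    obtain y where y: "y \<in> nR a" "y \<noteq> c" "y \<noteq> x" using pick2[of "nR a" c x] ca by auto
    have "hasT 2 N E m" by (rule T2_big[where a=a, OF m5(1) c D a x(1) y(1)]) (use x y in auto)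
    then show False using noR 2 by simp
  next
    case 3
    obtain x where x: "x \<in> nR a" "x \<noteq> c" using pick1[of "nR a" c] ca by auto
    have cx: "card (nR x) > 3" using rbig x nbr_lt by blast
    obtain y where y: "y \<in> nR x" "y \<noteq> c" "y \<noteq> a" using pick2[of "nR x" c a] cx by auto
    have "hasT 3 N E m" by (rule T3_big[where a=a and x=x, OF m5(1) c D a x(1) y(1)]) (use x y in auto)
    then show False using noR 3 by simp
  qed
qed

lemma P4: assumes c: "c < N" shows "card (nB c) \<le> m - 2"
proof (rule ccontr)
  assume "\<not> ?thesis" then have D: "card (nB c) \<ge> (m+1) - 2" by simp
  have bmin: "\<And>v. v < N \<Longrightarrow> card (nB v) \<ge> m - 4"
  proof -
    fix v assume v: "v < N"
    show "card (nB v) \<ge> m - 4" using deg_sum[OF v] P2[OF v] m12 by linarith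
  qed
  have cR: "card (nR c) = m - 5" using deg_sum[OF c] P1[OF c] D m12 by linarith
  then have "card (nR c) > 0" using m12 by linarith
  then obtain w where w: "w \<in> nR c" using pick0[of "nR c"] by auto
  have wN: "w < N" using w nbr_lt by blast
  have co: "c \<in> nR w" using nbr_sym[OF w c] .
  have "card (nR c - {w}) < card (nB w)" using bmin[OF wN] cR w m12 by simp
  then obtain a where a: "a \<in> nB w" "a \<notin> nR c - {w}" using pick[of "nR c - {w}" "nB w"] by auto
  have aN: "a < N" using a nbr_lt by blast
  have "a \<noteq> w" using a nbr_ne by blast
  then have anR: "a \<notin> nR c" using a by blast
  have "a \<noteq> c" using a(1) co nR_nB[OF wN] by blast
  then have ac: "a \<in> nB c" using nB_I[OF c aN _ anR] by blast
  have oa: "w \<in> nB a" using nbr_sym[OF a(1) wN] .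
  have oB: "w \<notin> nB c" using nR_nB[OF c w] .
  have oc: "w \<noteq> c" using w nbr_ne by blast
  have caB: "card (nB a) > 3" using bmin[OF aN] m12 by linarith
  show False
  proof (cases "j = 2")
    case True
    obtain y where y: "y \<in> nB a" "y \<noteq> c" "y \<noteq> w" using pick2[of "nB a" c w] caB by auto
    have "hasT 2 N EB (m+1)" by (rule T2_p1[where a=a, OF m5(2) c D ac oa y(1) oc y(2) _ oB]) (use y in auto)
    then show False using noB True by simp
  next
    case False then have j1: "j = 1" using jj by auto
    have "card (nB c) > 1" using D m12 by linarith
    then obtain b where b: "b \<in> nB c" "b \<noteq> a" using pick1[of "nB c" a] by auto
    have cbB: "card (nB b) > 3" using bmin[of b] b nbr_lt m12 by fastforce
    obtain y where y: "y \<in> nB b" "y \<noteq> c" "y \<noteq> a" "y \<noteq> w" using pick3[OF cbB, of c a w] by auto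
    have ob: "w \<noteq> b" using oB b by blast
    have "hasT 1 N EB (m+1)"
      by (rule T1_p1[where a=a and b=b, OF m5(2) c D ac b(1) oa y(1) _ oc ob y(2) y(3) y(4) oB]) (use b in auto)
    then show False using noB j1 by simp
  qed
qed

lemma P3: assumes c: "c < N" shows "card (nR c) \<le> m - 3"
proof (rule ccontr)
  assume "\<not> ?thesis" then have D: "card (nR c) \<ge> m - 2" by simp
  have rmin: "\<And>v. v < N \<Longrightarrow> card (nR v) \<ge> m - 4"
  proof -
    fix v assume v: "v < N"
    show "card (nR v) \<ge> m - 4" using deg_sum[OF v] P4[OF v] m12 by linarith
  qed
  have cB: "card (nB c) = m - 4" using deg_sum[OF c] P2[OF c] D m12 by linarith
  then have "card (nB c) > 0" using m12 by linarith
  then obtain w where w: "w \<in> nB c" using pick0[of "nB c"] by auto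
  have wN: "w < N" using w nbr_lt by blast
  have co: "c \<in> nB w" using nbr_sym[OF w c] .
  have "card (nB c - {w}) < card (nR w)" using rmin[OF wN] cB w m12 by simp
  then obtain a where a: "a \<in> nR w" "a \<notin> nB c - {w}" using pick[of "nB c - {w}" "nR w"] by auto
  have aN: "a < N" using a nbr_lt by blast
  have "a \<noteq> w" using a nbr_ne by blast
  then have anB: "a \<notin> nB c" using a by blast
  have "a \<noteq> c" using a(1) co nB_nR[OF wN] by blast
  then have ac: "a \<in> nR c" using nR_I[OF c aN _ anB] by blast
  have oa: "w \<in> nR a" using nbr_sym[OF a(1) wN] .
  have oR: "w \<notin> nR c" using nB_nR[OF c w] .
  have oc: "w \<noteq> c" using w nbr_ne by blast
  have caR: "card (nR a) > 3" using rmin[OF aN] m12 by linarith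
  consider "i = 1" | "i = 2" | "i = 3" using ii by auto
  then show False
  proof cases
    case 1
    have "card (nR c) > 1" using D m12 by linarith
    then obtain b where b: "b \<in> nR c" "b \<noteq> a" using pick1[of "nR c" a] by auto
    have cbR: "card (nR b) > 3" using rmin[of b] b nbr_lt m12 by fastforce
    obtain y where y: "y \<in> nR b" "y \<noteq> c" "y \<noteq> a" "y \<noteq> w" using pick3[OF cbR, of c a w] by auto
    have ob: "w \<noteq> b" using oR b by blast
    have "hasT 1 N E m"
      by (rule T1_p1[where a=a and b=b, OF m5(1) c D ac b(1) oa y(1) _ oc ob y(2) y(3) y(4) oR]) (use b in auto)
    then show False using noR 1 by simp
  next
    case 2
    obtain y where y: "y \<in> nR a" "y \<noteq> c" "y \<noteq> w" using pick2[of "nR a" c w] caR by auto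
    have "hasT 2 N E m" by (rule T2_p1[where a=a, OF m5(1) c D ac oa y(1) oc y(2) _ oR]) (use y in auto)
    then show False using noR 2 by simp
  next
    case 3
    have coR: "card (nR w) > 3" using rmin[OF wN] m12 by linarith
    obtain y where y: "y \<in> nR w" "y \<noteq> c" "y \<noteq> a" using pick2[of "nR w" c a] coR by auto
    have "hasT 3 N E m" by (rule T3_p1[where a=a and x=w, OF m5(1) c D ac oa y(1) oc y(2) y(3) oR])
    then show False using noR 3 by simp
  qed
qed

lemma P5: assumes c: "c < N" shows "card (nB c) \<le> m - 3"
proof (rule ccontr)
  assume "\<not> ?thesis" then have D: "card (nB c) \<ge> (m+1) - 3" by simp
  have cB: "card (nB c) = m - 2" using D P4[OF c] by linarith
  have cR: "card (nR c) = m - 4" using deg_sum[OF c] cB m12 by linarith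
  have key: "\<And>w. w \<in> nR c \<Longrightarrow> card (nB w \<inter> nB c) \<ge> 2"
  proof -
    fix w assume w: "w \<in> nR c"
    have wN: "w < N" using w nbr_lt by blast
    have cw: "c \<in> nR w" using nbr_sym[OF w c] .
    have wB: "w \<notin> nB c" using nR_nB[OF c w] .
    have sub: "nB c \<subseteq> (nB w \<inter> nB c) \<union> (nR w - {c})"
    proof
      fix u assume u: "u \<in> nB c"
      have "u < N" "u \<noteq> c" "u \<noteq> w" using u nbr_lt nbr_ne wB by blast+
      then show "u \<in> (nB w \<inter> nB c) \<union> (nR w - {c})" using nR_I[OF wN] u by blast
    qed
    have "card (nB c) \<le> card ((nB w \<inter> nB c) \<union> (nR w - {c}))"
      by (rule card_mono) (simp_all add: sub)
    also have "\<dots> \<le> card (nB w \<inter> nB c) + card (nR w - {c})" by (rule card_Un_le)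
    finally have "card (nB c) \<le> card (nB w \<inter> nB c) + card (nR w - {c})" .
    moreover have "card (nR w - {c}) = card (nR w) - 1" using cw by simp
    moreover have "card (nR w) \<le> m - 3" using P3[OF wN] .
    ultimately show "card (nB w \<inter> nB c) \<ge> 2" using cB m12 by linarith
  qed
  show False
  proof (cases "j = 2")
    case True
    have "\<exists>a\<in>nB c. card (nB a \<inter> nR c) \<ge> 2"
    proof (rule ccontr)
      assume "\<not> ?thesis"
      then have le1: "\<And>a. a \<in> nB c \<Longrightarrow> card (nB a \<inter> nR c) \<le> 1" by force
      have eq1: "\<And>w. w \<in> nR c \<Longrightarrow> card (nB w \<inter> nB c) = card {a\<in>nB c. a \<in> nB w}"
        by (rule arg_cong[where f=card]) blast
      have eq2: "\<And>a. a \<in> nB c \<Longrightarrow> card (nB a \<inter> nR c) = card {w\<in>nR c. a \<in> nB w}"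
      proof -
        fix a assume a: "a \<in> nB c"
        have "nB a \<inter> nR c = {w\<in>nR c. a \<in> nB w}"
          using nbr_sym[of a N EB] nbr_sym[of _ N EB a] a nbr_lt by blast
        then show "card (nB a \<inter> nR c) = card {w\<in>nR c. a \<in> nB w}" by simp
      qed
      have "(\<Sum>w\<in>nR c. card {a\<in>nB c. a \<in> nB w}) = (\<Sum>a\<in>nB c. card {w\<in>nR c. a \<in> nB w})"
        by (rule dc) simp_all
      moreover have "(\<Sum>w\<in>nR c. (2::nat)) \<le> (\<Sum>w\<in>nR c. card {a\<in>nB c. a \<in> nB w})"
        by (rule sum_mono) (use key eq1 in force)
      moreover have "(\<Sum>a\<in>nB c. card {w\<in>nR c. a \<in> nB w}) \<le> (\<Sum>a\<in>nB c. (1::nat))"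
        by (rule sum_mono) (use le1 eq2 in force)
      moreover have "(\<Sum>w\<in>nR c. (2::nat)) = card (nR c) * 2" by simp
      moreover have "(\<Sum>a\<in>nB c. (1::nat)) = card (nB c)" by simp
      ultimately show False using cB cR m12 by linarith
    qed
    then obtain a where a: "a \<in> nB c" "card (nB a \<inter> nR c) \<ge> 2" by auto
    then have "card (nB a \<inter> nR c) > 0" "card (nB a \<inter> nR c) > 1" by auto
    then obtain x where x: "x \<in> nB a \<inter> nR c" using pick0 by blast
    obtain y where y: "y \<in> nB a \<inter> nR c" "y \<noteq> x" using pick1[of "nB a \<inter> nR c" x] \<open>card (nB a \<inter> nR c) > 1\<close> by auto
    have xc: "x \<noteq> c" "x \<notin> nB c" using x nbr_ne nR_nB[OF c] by blast+
    have yc: "y \<noteq> c" "y \<notin> nB c" using y nbr_ne nR_nB[OF c] by blast+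
    have "hasT 2 N EB (m+1)"
      by (rule T2_ex[where a=a, OF m5(2) c D a(1) _ _ xc(1) yc(1) _ xc(2) yc(2)]) (use x y in auto)
    then show False using noB True by simp
  next
    case False then have j1: "j = 1" using jj by auto
    have "card (nR c) > 1" using cR m12 by linarith
    then obtain w1 where w1: "w1 \<in> nR c" using pick0 by force
    obtain w2 where w2: "w2 \<in> nR c" "w2 \<noteq> w1" using pick1[of "nR c" w1] \<open>card (nR c) > 1\<close> by auto
    have "card (nB w2 \<inter> nB c) > 0" using key[OF w2(1)] by linarith
    then obtain b where b: "b \<in> nB w2 \<inter> nB c" using pick0 by blast
    have "card (nB w1 \<inter> nB c) > 1" using key[OF w1] by linarith
    then obtain a where a: "a \<in> nB w1 \<inter> nB c" "a \<noteq> b" using pick1[of "nB w1 \<inter> nB c" b] by auto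
    have w1N: "w1 < N" and w2N: "w2 < N" using w1 w2 nbr_lt by blast+
    have w1a: "w1 \<in> nB a" using nbr_sym[of a N EB w1] a w1N by blast
    have w2b: "w2 \<in> nB b" using nbr_sym[of b N EB w2] b w2N by blast
    have w1c: "w1 \<noteq> c" "w1 \<notin> nB c" using w1 nbr_ne nR_nB[OF c] by blast+
    have w2c: "w2 \<noteq> c" "w2 \<notin> nB c" using w2 nbr_ne nR_nB[OF c] by blast+
    have "hasT 1 N EB (m+1)"
      by (rule T1_ex[where a=a and b=b, OF m5(2) c D _ _ w1a w2b a(2) w1c(1) _ w2c(1) _ w2(2) w1c(2) w2c(2)])
        (use a b w1c w2c in auto)
    then show False using noB j1 by simp
  qed
qed

lemma regR: "v < N \<Longrightarrow> card (nR v) = m - 3"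
  using P3[of v] P5[of v] deg_sum[of v] m12 by linarith
lemma regB: "v < N \<Longrightarrow> card (nB v) = m - 3"
  using regR[of v] deg_sum[of v] m12 by linarith

theorem contra: False
proof -
  define c where "c = (0::nat)"
  have c: "c < N" using NN m12 c_def by simp
  have D: "card (nR c) \<ge> m - 3" using regR[OF c] by simp
  have fi: "\<And>w. w \<in> nB c \<Longrightarrow> \<exists>a. a \<in> nR c \<and> a \<in> nR w"
  proof -
    fix w assume w: "w \<in> nB c"
    have wN: "w < N" using w nbr_lt by blast
    have cw: "c \<in> nB w" using nbr_sym[OF w c] .
    have "card (nB c - {w}) < card (nR w)" using regR[OF wN] regB[OF c] w m12 by simp
    then obtain a where a: "a \<in> nR w" "a \<notin> nB c - {w}" using pick[of "nB c - {w}" "nR w"] by auto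
    have aN: "a < N" using a nbr_lt by blast
    have "a \<noteq> w" using a nbr_ne by blast
    then have anB: "a \<notin> nB c" using a by blast
    have "a \<noteq> c" using a(1) cw nB_nR[OF wN] by blast
    then have "a \<in> nR c" using nR_I[OF c aN _ anB] by blast
    then show "\<exists>a. a \<in> nR c \<and> a \<in> nR w" using a by blast
  qed
  have fii: "\<And>a. a \<in> nR c \<Longrightarrow> \<exists>w\<in>nB c. w \<notin> nR a"
  proof -
    fix a assume a: "a \<in> nR c"
    have aN: "a < N" using a nbr_lt by blast
    have ca: "c \<in> nR a" using nbr_sym[OF a c] .
    have "card (nR a - {c}) < card (nB c)" using regR[OF aN] regB[OF c] ca m12 by simp
    then obtain w where w: "w \<in> nB c" "w \<notin> nR a - {c}" using pick[of "nR a - {c}" "nB c"] by auto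
    have "w \<noteq> c" using w nbr_ne by blast
    then show "\<exists>w\<in>nB c. w \<notin> nR a" using w by blast
  qed
  have cBpos: "card (nB c) > 0" and cRpos: "card (nR c) > 0" using regB[OF c] regR[OF c] m12 by auto
  consider "i = 1" | "i = 2" | "i = 3" using ii by auto
  then show False
  proof cases
    case 1
    obtain w1 where w1: "w1 \<in> nB c" using pick0[OF cBpos] by blast
    obtain a1 where a1: "a1 \<in> nR c" "a1 \<in> nR w1" using fi[OF w1] by blast
    obtain w2 where w2: "w2 \<in> nB c" "w2 \<notin> nR a1" using fii[OF a1(1)] by blast
    obtain a2 where a2: "a2 \<in> nR c" "a2 \<in> nR w2" using fi[OF w2(1)] by blast
    have w1N: "w1 < N" and w2N: "w2 < N" and a1N: "a1 < N" using w1 w2 a1 nbr_lt by blast+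
    have w1a: "w1 \<in> nR a1" using nbr_sym[OF a1(2) w1N] .
    have w2a: "w2 \<in> nR a2" using nbr_sym[OF a2(2) w2N] .
    have a12: "a1 \<noteq> a2" using w2 w2a by blast
    have w12: "w2 \<noteq> w1" using w1a w2 by blast
    have w1c: "w1 \<noteq> c" "w1 \<notin> nR c" using w1 nbr_ne nB_nR[OF c] by blast+
    have w2c: "w2 \<noteq> c" "w2 \<notin> nR c" using w2 nbr_ne nB_nR[OF c] by blast+
    have "hasT 1 N E m"
      by (rule T1_ex[where a=a1 and b=a2, OF m5(1) c D a1(1) a2(1) w1a w2a a12 w1c(1) _ w2c(1) _ w12 w1c(2) w2c(2)])
        (use a1 a2 w1c w2c nR_nB[OF c] in blast)+
    then show False using noR 1 by simp
  next
    case 3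
    have "\<exists>w\<in>nB c. \<exists>y\<in>nB c. y \<in> nR w"
    proof (rule ccontr)
      assume H: "\<not> ?thesis"
      obtain a where a: "a \<in> nR c" using pick0[OF cRpos] by blast
      have aN: "a < N" using a nbr_lt by blast
      have sub: "insert c (nB c) \<subseteq> nR a"
      proof
        fix w assume "w \<in> insert c (nB c)"
        then consider "w = c" | "w \<in> nB c" by blast
        then show "w \<in> nR a"
        proof cases
          case 1 then show ?thesis using nbr_sym[OF a c] by simp
        next
          case 2
          have wN: "w < N" using 2 nbr_lt by blast
          have cw: "c \<notin> nR w" using nbr_sym[OF 2 c] nB_nR[OF wN] by blast
          have "nR w \<subseteq> nR c"
          proof
            fix u assume u: "u \<in> nR w"
            have "u < N" "u \<noteq> c" "u \<notin> nB c" using u nbr_lt cw H 2 by blast+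
            then show "u \<in> nR c" using nR_I[OF c] by blast
          qed
          moreover have "card (nR w) = card (nR c)" using regR[OF wN] regR[OF c] by simp
          ultimately have "nR w = nR c" by (intro card_subset_eq) simp_all
          then have "a \<in> nR w" using a by simp
          then show ?thesis using nbr_sym[OF _ wN] by blast
        qed
      qed
      have "c \<notin> nB c" using nbr_ne by blast
      then have "card (insert c (nB c)) = m - 2" using regB[OF c] m12 by simp
      moreover have "card (insert c (nB c)) \<le> card (nR a)" by (rule card_mono) (simp, rule sub)
      ultimately show False using regR[OF aN] m12 by linarith
    qed
    then obtain w y where w: "w \<in> nB c" and y: "y \<in> nB c" "y \<in> nR w" by blast
    obtain a where a: "a \<in> nR c" "a \<in> nR w" using fi[OF w] by blast
    have wN: "w < N" using w nbr_lt by blast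
    have wa: "w \<in> nR a" using nbr_sym[OF a(2) wN] .
    have wc: "w \<noteq> c" "w \<notin> nR c" using w nbr_ne nB_nR[OF c] by blast+
    have yc: "y \<noteq> c" "y \<notin> nR c" using y nbr_ne nB_nR[OF c] by blast+
    have ya: "y \<noteq> a" using a(1) yc(2) by blast
    have "hasT 3 N E m"
      by (rule T3_ex[where a=a and x=w, OF m5(1) c D a(1) wa y(2) wc(1) yc(1) ya wc(2) yc(2)])
    then show False using noR 3 by simp
  next
    case 2
    show False
    proof (cases "\<exists>a\<in>nR c. card (nR a \<inter> nB c) \<ge> 2")
      case True
      then obtain a where a: "a \<in> nR c" "card (nR a \<inter> nB c) \<ge> 2" by auto
      then have "card (nR a \<inter> nB c) > 0" "card (nR a \<inter> nB c) > 1" by auto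
      then obtain x where x: "x \<in> nR a \<inter> nB c" using pick0 by blast
      obtain y where y: "y \<in> nR a \<inter> nB c" "y \<noteq> x" using pick1[of "nR a \<inter> nB c" x] \<open>card (nR a \<inter> nB c) > 1\<close> by auto
      have xc: "x \<noteq> c" "x \<notin> nR c" using x nbr_ne nB_nR[OF c] by blast+
      have yc: "y \<noteq> c" "y \<notin> nR c" using y nbr_ne nB_nR[OF c] by blast+
      have "hasT 2 N E m"
        by (rule T2_ex[where a=a, OF m5(1) c D a(1) _ _ xc(1) yc(1) _ xc(2) yc(2)]) (use x y in auto)
      then show False using noR 2 by simp
    next
      case False
      then have le1: "\<And>a. a \<in> nR c \<Longrightarrow> card (nR a \<inter> nB c) \<le> 1" by force
      have uniq: "\<And>a w w'. a \<in> nR c \<Longrightarrow> w \<in> nB c \<Longrightarrow> w' \<in> nB c \<Longrightarrow> w \<in> nR a \<Longrightarrow> w' \<in> nR a \<Longrightarrow> w = w'"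
      proof -
        fix a w w' assume "a \<in> nR c" "w \<in> nB c" "w' \<in> nB c" "w \<in> nR a" "w' \<in> nR a"
        then have "card (nR a \<inter> nB c) \<le> Suc 0" "w \<in> nR a \<inter> nB c" "w' \<in> nR a \<inter> nB c" using le1 by auto
        then show "w = w'" using card_le_Suc0_iff_eq[of "nR a \<inter> nB c"] by auto
      qed
      define g where "g = (\<lambda>w. SOME a. a \<in> nR c \<and> a \<in> nR w)"
      have gP: "\<And>w. w \<in> nB c \<Longrightarrow> g w \<in> nR c \<and> g w \<in> nR w"
        unfolding g_def using fi by (rule someI_ex)
      have gsym: "\<And>w. w \<in> nB c \<Longrightarrow> w \<in> nR (g w)"
        using gP nbr_sym nbr_lt by blast
      have ginj: "inj_on g (nB c)"
      proof (rule inj_onI)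
        fix w w' assume w: "w \<in> nB c" and w': "w' \<in> nB c" and e: "g w = g w'"
        show "w = w'" using uniq[of "g w" w w'] gP[OF w] gsym[OF w] gsym[OF w'] e w w' by simp
      qed
      have gimg: "g ` nB c = nR c"
      proof (rule card_subset_eq)
        show "finite (nR c)" by simp
        show "g ` nB c \<subseteq> nR c" using gP by blast
        show "card (g ` nB c) = card (nR c)" using card_image[OF ginj] regB[OF c] regR[OF c] by simp
      qed
      obtain w1 where w1: "w1 \<in> nB c" using pick0[OF cBpos] by blast
      define a where "a = g w1"
      have a: "a \<in> nR c" "a \<in> nR w1" using gP[OF w1] a_def by auto
      have w1N: "w1 < N" and aN: "a < N" using w1 a nbr_lt by blast+
      have only: "\<And>a'. a' \<in> nR w1 \<Longrightarrow> a' \<in> nR c \<Longrightarrow> a' = a"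
      proof -
        fix a' assume a'1: "a' \<in> nR w1" and a'2: "a' \<in> nR c"
        then obtain w' where w': "w' \<in> nB c" "a' = g w'" using gimg by (metis imageE)
        have "w1 \<in> nR a'" using nbr_sym[OF a'1 w1N] .
        moreover have "w' \<in> nR a'" using gsym[OF w'(1)] w'(2) by simp
        ultimately have "w' = w1" using uniq[OF a'2 w'(1) w1] by simp
        then show "a' = a" using w'(2) a_def by simp
      qed
      have caR: "card (nR a) > 2" using regR[OF aN] m12 by linarith
      obtain y where y: "y \<in> nR a" "y \<noteq> c" "y \<noteq> w1" using pick2[OF caR, of c w1] by auto
      have w1a: "w1 \<in> nR a" using nbr_sym[OF a(2) w1N] .
      have yB: "y \<notin> nB c" using uniq[OF a(1) _ w1 _ w1a] y by blast
      have yN: "y < N" using y nbr_lt by blast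
      have yR: "y \<in> nR c" using nR_I[OF c yN y(2) yB] .
      have ya: "y \<noteq> a" using y nbr_ne by blast
      have yw: "y \<notin> nR w1" using only[of y] yR ya by blast
      have ca: "c \<in> nR a" using nbr_sym[OF a(1) c] .
      have cw: "c \<notin> nR w1" using nbr_sym[OF w1 c] nB_nR[OF w1N] by blast
      have cw1: "c \<noteq> w1" using w1 nbr_ne by blast
      have D1: "card (nR w1) \<ge> m - 3" using regR[OF w1N] by simp
      have "hasT 2 N E m"
        by (rule T2_ex[where a=a, OF m5(1) w1N D1 a(2) ca y(1) _ _ _ cw yw]) (use cw1 y in auto)
      then show False using noR 2 by simp
    qed
  qed
qed

end


lemma upper:
  assumes "m \<ge> 12" "i \<in> {1,2,3}" "j \<in> {1,2}"
  shows "hasT i (2*m-5) E m \<or> hasT j (2*m-5) (compl_graph (2*m-5) E) (m+1)"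
proof (rule ccontr)
  assume "\<not> ?thesis"
  then interpret rs m "2*m-5" E i j using assms by unfold_locales auto
  show False by (rule contra)
qed

lemma deg_lower:
  assumes c: "contains N F n H" and st: "\<And>k. 1 \<le> k \<Longrightarrow> k \<le> d \<Longrightarrow> {0,k} \<in> H" and dn: "d < n"
  shows "\<exists>v<N. card (nbr N F v) \<ge> d"
proof -
  from c obtain f where f1: "inj_on f {0..<n}" and f2: "f ` {0..<n} \<subseteq> {0..<N}" and f3: "\<forall>e\<in>H. f ` e \<in> F"
    unfolding contains_def by (elim exE conjE)
  have "0 \<in> {0..<n}" using dn by simp
  then have f0: "f 0 < N" using f2 by (simp add: image_subset_iff)
  have sub: "f ` {1..d} \<subseteq> nbr N F (f 0)"
  proof
    fix z assume "z \<in> f ` {1..d}"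
    then obtain k where k: "k \<in> {1..d}" "z = f k" by (elim imageE) simp
    have kn: "k \<in> {0..<n}" "0 \<in> {0..<n}" using k dn by auto
    have "f k < N" using f2 kn by (simp add: image_subset_iff)
    moreover have "f k \<noteq> f 0"
    proof
      assume "f k = f 0" then have "k = 0" using inj_onD[OF f1 _ kn] by simp
      then show False using k by simp
    qed
    moreover have "{0,k} \<in> H" using st k by simp
    then have "f ` {0,k} \<in> F" using f3 by blast
    then have "{f 0, f k} \<in> F" by simp
    ultimately show "z \<in> nbr N F (f 0)" unfolding nbr_def using k by simp
  qed
  have "{1..d} \<subseteq> {0..<n}" using dn by auto
  then have "inj_on f {1..d}" using f1 inj_on_subset by blast
  then have "card (f ` {1..d}) = d" by (simp add: card_image)
  moreover have "card (f ` {1..d}) \<le> card (nbr N F (f 0))" by (rule card_mono) (simp, rule sub)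
  ultimately show ?thesis using f0 by auto
qed

definition E0 :: "nat \<Rightarrow> nat \<Rightarrow> nat set set" where
  "E0 m N = {e \<in> pairs N. \<exists>u v. e = {u,v} \<and> (u < m - 3 \<longleftrightarrow> v < m - 3)}"

lemma E0_graph: "is_graph N (E0 m N)" unfolding is_graph_def E0_def by auto

lemma E0_red: assumes "N \<le> 2*m - 6" "m \<ge> 12" "v < N" shows "card (nbr N (E0 m N) v) \<le> m - 4"
proof (cases "v < m - 3")
  case True
  have "nbr N (E0 m N) v \<subseteq> {0..<m-3} - {v}"
  proof
    fix u assume u: "u \<in> nbr N (E0 m N) v"
    then have "{v,u} \<in> E0 m N" "u \<noteq> v" unfolding nbr_def by auto
    then obtain a b where "{v,u} = {a,b}" "a < m - 3 \<longleftrightarrow> b < m - 3" unfolding E0_def by auto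
    then have "u < m - 3 \<longleftrightarrow> v < m - 3" by (auto simp: doubleton_eq_iff)
    then show "u \<in> {0..<m-3} - {v}" using True \<open>u \<noteq> v\<close> by auto
  qed
  then have "card (nbr N (E0 m N) v) \<le> card ({0..<m-3} - {v})" by (intro card_mono) auto
  then show ?thesis using True by simp
next
  case False
  have "nbr N (E0 m N) v \<subseteq> {m-3..<N} - {v}"
  proof
    fix u assume u: "u \<in> nbr N (E0 m N) v"
    then have "{v,u} \<in> E0 m N" "u \<noteq> v" "u < N" unfolding nbr_def by auto
    then obtain a b where "{v,u} = {a,b}" "a < m - 3 \<longleftrightarrow> b < m - 3" unfolding E0_def by auto
    then have "u < m - 3 \<longleftrightarrow> v < m - 3" by (auto simp: doubleton_eq_iff)
    then show "u \<in> {m-3..<N} - {v}" using False \<open>u \<noteq> v\<close> \<open>u < N\<close> by auto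
  qed
  then have "card (nbr N (E0 m N) v) \<le> card ({m-3..<N} - {v})" by (intro card_mono) auto
  then show ?thesis using False assms by simp
qed

lemma E0_blue: assumes "N \<le> 2*m - 6" "m \<ge> 12" "v < N"
  shows "card (nbr N (compl_graph N (E0 m N)) v) \<le> m - 3"
proof -
  have mem: "\<And>u. u \<in> nbr N (compl_graph N (E0 m N)) v \<Longrightarrow> u < N \<and> \<not> (u < m - 3 \<longleftrightarrow> v < m - 3)"
  proof -
    fix u assume u: "u \<in> nbr N (compl_graph N (E0 m N)) v"
    then have uN: "u < N" and uv: "u \<noteq> v" and nE: "{v,u} \<notin> E0 m N" and pu: "{v,u} \<in> pairs N"
      unfolding nbr_def compl_graph_def by auto
    have "\<not> (u < m - 3 \<longleftrightarrow> v < m - 3)"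
    proof
      assume "u < m - 3 \<longleftrightarrow> v < m - 3"
      then have "{v,u} \<in> E0 m N" using pu unfolding E0_def by blast
      then show False using nE by simp
    qed
    then show "u < N \<and> \<not> (u < m - 3 \<longleftrightarrow> v < m - 3)" using uN by simp
  qed
  show ?thesis
  proof (cases "v < m - 3")
    case True
    have "nbr N (compl_graph N (E0 m N)) v \<subseteq> {m-3..<N}"
    proof
      fix u assume "u \<in> nbr N (compl_graph N (E0 m N)) v"
      then show "u \<in> {m-3..<N}" using mem[of u] True by auto
    qed
    then have "card (nbr N (compl_graph N (E0 m N)) v) \<le> card {m-3..<N}" by (intro card_mono) auto
    then show ?thesis using assms by simp
  next
    case False
    have "nbr N (compl_graph N (E0 m N)) v \<subseteq> {0..<m-3}"
    proof
      fix u assume "u \<in> nbr N (compl_graph N (E0 m N)) v"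
      then show "u \<in> {0..<m-3}" using mem[of u] False by auto
    qed
    then have "card (nbr N (compl_graph N (E0 m N)) v) \<le> card {0..<m-3}" by (intro card_mono) auto
    then show ?thesis by simp
  qed
qed

lemma star_in: assumes "1 \<le> k" "k \<le> n - 3"
  shows "{0,k} \<in> T1 n" "{0,k} \<in> T2 n" "{0,k} \<in> Tstar n"
proof -
  have "{0,k} \<in> {{0, k'} | k'. 1 \<le> k' \<and> k' \<le> n - 3}" using assms by blast
  then show "{0,k} \<in> T1 n" "{0,k} \<in> T2 n" "{0,k} \<in> Tstar n"
    unfolding T1_def T2_def Tstar_def by blast+
qed

lemma ramsey_gen:
  fixes t s :: nat
  assumes m: "m \<ge> 12" and t: "t \<in> {1,2,3}" and s: "s \<in> {1,2}"
    and H1: "H1 = (if t = 1 then T1 m else if t = 2 then T2 m else Tstar m)"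
    and H2: "H2 = (if s = 1 then T1 (m+1) else if s = 2 then T2 (m+1) else Tstar (m+1))"
  shows "ramsey m H1 (m+1) H2 = 2*m - 5"
  unfolding ramsey_def
proof (rule Least_equality)
  have c1: "\<And>N E. contains N E m H1 = hasT t N E m" unfolding hasT_def H1 by simp
  have c2: "\<And>N E. contains N E (m+1) H2 = hasT s N E (m+1)" unfolding hasT_def H2 by simp
  have "2*m-5 \<ge> 1" using m by simp
  moreover have "\<forall>E. is_graph (2*m-5) E \<longrightarrow> contains (2*m-5) E m H1 \<or>
          contains (2*m-5) (compl_graph (2*m-5) E) (m+1) H2"
    unfolding c1 c2 using upper[OF m t s] by blast
  ultimately show "2*m-5 \<ge> 1 \<and> (\<forall>E. is_graph (2*m-5) E \<longrightarrow> contains (2*m-5) E m H1 \<or>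
          contains (2*m-5) (compl_graph (2*m-5) E) (m+1) H2)" by blast
next
  fix N assume P: "N \<ge> 1 \<and> (\<forall>E. is_graph N E \<longrightarrow> contains N E m H1 \<or>
          contains N (compl_graph N E) (m+1) H2)"
  show "2*m - 5 \<le> N"
  proof (rule ccontr)
    assume "\<not> ?thesis" then have NN: "N \<le> 2*m - 6" by simp
    have st1: "\<And>k. 1 \<le> k \<Longrightarrow> k \<le> m - 3 \<Longrightarrow> {0,k} \<in> H1"
      unfolding H1 using star_in[of _ m] by simp
    have st2: "\<And>k. 1 \<le> k \<Longrightarrow> k \<le> m - 2 \<Longrightarrow> {0,k} \<in> H2"
      unfolding H2 using star_in[of _ "m+1"] by simp
    from P E0_graph have "contains N (E0 m N) m H1 \<or> contains N (compl_graph N (E0 m N)) (m+1) H2"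
      by blast
    then show False
    proof
      assume "contains N (E0 m N) m H1"
      moreover have "m - 3 < m" using m by simp
      ultimately obtain v where v: "v < N" "card (nbr N (E0 m N) v) \<ge> m - 3"
        using deg_lower[OF _ st1] by blast
      then show False using E0_red[OF NN m v(1)] m by linarith
    next
      assume "contains N (compl_graph N (E0 m N)) (m+1) H2"
      moreover have "m - 2 < m + 1" using m by simp
      ultimately obtain v where v: "v < N" "card (nbr N (compl_graph N (E0 m N)) v) \<ge> m - 2"
        using deg_lower[OF _ st2] by blast
      then show False using E0_blue[OF NN m v(1)] m by linarith
    qed
  qed
qed

theorem theorem6p5:
  fixes m i j :: nat
  assumes "m \<ge> 12" and "i \<in> {1, 2}" and "j \<in> {1, 2}"
  shows "ramsey m (Ti i m) (m + 1) (Ti j (m + 1)) = 2 * m - 5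
       \<and> ramsey m (Tstar m) (m + 1) (Ti j (m + 1)) = 2 * m - 5"
proof
  show "ramsey m (Ti i m) (m + 1) (Ti j (m + 1)) = 2 * m - 5"
    by (rule ramsey_gen[OF assms(1), of i j]) (use assms in \<open>auto simp: Ti_def\<close>)
  show "ramsey m (Tstar m) (m + 1) (Ti j (m + 1)) = 2 * m - 5"
    by (rule ramsey_gen[OF assms(1), of 3 j]) (use assms in \<open>auto simp: Ti_def\<close>)
qed

end
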